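(* Let $t=1$, let $r_{\max}$ be the maximum requirement of a family, and let $\rho$ be the least common multiple of $\{1,\dots,r_{\max}\}$. If $F'\subseteq F$ is a set of families with $\sum_{f_i\in F'}\boldsymbol{r}_i> r_{\max}(\rho-1)$, then $F'$ contains a homogeneous $\rho$-block.
   Context: There is a single service, so each family $f_i\in F$ has a requirement $\boldsymbol{r}_i\in\mathbb{N}$, and $r_{\max}=\max_{f_i\in F}\boldsymbol{r}_i$. A set $F''\subseteq F$ of families is a homogeneous $\rho$-block if all families in $F''$ have the same requirement and their total requirement equals exactly $\rho$. *)

theory Defs
  imports Main
begin

text \<open>Single service: each family f has a requirement r f :: nat.\<close>

definition homogeneous_block :: "('a \<Rightarrow> nat) \<Rightarrow> nat \<Rightarrow> 'a set \<Rightarrow> bool" where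
  "homogeneous_block r \<rho> B \<longleftrightarrow>
     (\<forall>f\<in>B. \<forall>g\<in>B. r f = r g) \<and> (\<Sum>f\<in>B. r f) = \<rho>"

definition r_max :: "('a \<Rightarrow> nat) \<Rightarrow> 'a set \<Rightarrow> nat" where
  "r_max r F = Max (r ` F)"

end

theory Submission
  imports Defs
begin

theorem mainTheorem7:
  fixes F :: "'a set" and r :: "'a \<Rightarrow> nat" and F' :: "'a set"
  assumes "finite F" and "F \<noteq> {}"
    and "F' \<subseteq> F"
    and "(\<Sum>f\<in>F'. r f) > r_max r F * (Lcm {1..r_max r F} - 1)"
  shows "\<exists>B\<subseteq>F'. homogeneous_block r (Lcm {1..r_max r F}) B"
proof (rule ccontr)
  assume neg: "\<not> ?thesis"
  define m where "m = r_max r F"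
  define \<rho> where "\<rho> = Lcm {1..m}"
  have finF': "finite F'" using assms(1,3) finite_subset by blast
  have rle: "r f \<le> m" if "f \<in> F'" for f
    unfolding m_def r_max_def using that assms(1,3) by (auto intro: Max_ge)
  have rhopos: "\<rho> > 0" unfolding \<rho>_def by (metis Lcm_0_iff_nat atLeastAtMost_iff finite_atLeastAtMost gr0I not_one_le_zero)
  have small: "v * card {f \<in> {f\<in>F'. r f \<noteq> 0}. r f = v} \<le> \<rho> - 1" if v: "v \<in> {1..m}" for v
  proof (rule ccontr)
    assume "\<not> ?thesis"
    hence ge: "v * card {f \<in> {f\<in>F'. r f \<noteq> 0}. r f = v} \<ge> \<rho>" by simp
    have vd: "v dvd \<rho>" unfolding \<rho>_def using v by (auto intro: dvd_Lcm)
    then obtain k where k: "\<rho> = v * k" by blast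
    have vpos: "v > 0" using v by auto
    have "k \<le> card {f \<in> {f\<in>F'. r f \<noteq> 0}. r f = v}" using ge k vpos by simp
    then obtain B where B: "B \<subseteq> {f \<in> {f\<in>F'. r f \<noteq> 0}. r f = v}" "card B = k"
      by (meson obtain_subset_with_card_n)
    have finB: "finite B" using B(1) finF' finite_subset by (metis (no_types, lifting) finite_Collect_conjI mem_Collect_eq subsetI)
    have "(\<Sum>f\<in>B. r f) = (\<Sum>f\<in>B. v)" using B(1) by (intro sum.cong) auto
    also have "\<dots> = \<rho>" using B(2) k by simp
    finally have "homogeneous_block r \<rho> B" using B(1) unfolding homogeneous_block_def by auto
    moreover have "B \<subseteq> F'" using B(1) by auto
    ultimately show False using neg unfolding \<rho>_def m_def by blast
  qed
  have "(\<Sum>f\<in>F'. r f) = (\<Sum>f\<in>{f\<in>F'. r f \<noteq> 0}. r f)"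
    using finF' by (intro sum.mono_neutral_right) auto
  also have "\<dots> = (\<Sum>v\<in>{1..m}. \<Sum>f\<in>{f \<in> {f\<in>F'. r f \<noteq> 0}. r f = v}. r f)"
    using finF' rle by (intro sum.group[symmetric]) auto
  also have "\<dots> = (\<Sum>v\<in>{1..m}. v * card {f \<in> {f\<in>F'. r f \<noteq> 0}. r f = v})"
    by (intro sum.cong) auto
  also have "\<dots> \<le> (\<Sum>v\<in>{1..m}. \<rho> - 1)" by (intro sum_mono small)
  also have "\<dots> = m * (\<rho> - 1)" by simp
  finally show False using assms(4) unfolding m_def \<rho>_def by simp
qed

end
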